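(* For all $P,Q\in\Gamma_n$, $$D_{f_8}(P\|Q)\le \tfrac13 D_{f_1}(P\|Q)\le \tfrac14 D_{f_3}(P\|Q)\le \tfrac13 D_{f_2}(P\|Q)\le D_{f_6}(P\|Q).$$ Equivalently, $$\tfrac14\Delta-\tfrac13 M_{SH}\le \tfrac13\big(h-\tfrac12 M_{SG}\big)\le \tfrac14\big(h-\tfrac13 M_{SH}\big)\le\tfrac13\big(h-\tfrac14\Delta\big)\le \tfrac12 M_{SG}-\tfrac13 M_{SH},$$ all measures evaluated at $(P\|Q)$.
   Context: $\Gamma_n=\{P=(p_1,\dots,p_n): p_i>0,\ \sum_i p_i=1\}$, $n\ge2$. For $f:(0,\infty)\to\mathbb{R}$, $D_f(P\|Q)=\sum_{i=1}^n q_i f(p_i/q_i)$. For $x>0$ let $A=\frac{x+1}{2}$, $G=\sqrt x$, $H=\frac{2x}{x+1}$, $S=\sqrt{\frac{x^2+1}{2}}$ (means of $x$ and $1$), and define $f_1(x)=A-\frac{G+S}{2}$, $f_2(x)=\frac{A+H}{2}-G$, $f_3(x)=\frac13\big[3A+H-S-3G\big]$, $f_6(x)=\frac16\big[S+2H-3G\big]$, $f_8(x)=\frac16\big[3A-2S-H\big]$. The measures: $M_{SG}=\sum_i\big(\sqrt{(p_i^2+q_i^2)/2}-\sqrt{p_iq_i}\big)$, $M_{SH}=\sum_i\big(\sqrt{(p_i^2+q_i^2)/2}-\frac{2p_iq_i}{p_i+q_i}\big)$, $h=\frac12\sum_i(\sqrt{p_i}-\sqrt{q_i})^2$, $\Delta=\sum_i\frac{(p_i-q_i)^2}{p_i+q_i}$.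 *)

theory Defs
  imports Complex_Main
begin

definition prob_vec :: "nat \<Rightarrow> (nat \<Rightarrow> real) \<Rightarrow> bool" where
  "prob_vec n P \<longleftrightarrow> (\<forall>i<n. P i > 0) \<and> (\<Sum>i<n. P i) = 1"

definition csiszar :: "(real \<Rightarrow> real) \<Rightarrow> nat \<Rightarrow> (nat \<Rightarrow> real) \<Rightarrow> (nat \<Rightarrow> real) \<Rightarrow> real" where
  "csiszar f n P Q = (\<Sum>i<n. Q i * f (P i / Q i))"

definition meanA :: "real \<Rightarrow> real" where "meanA x = (x + 1) / 2"
definition meanG :: "real \<Rightarrow> real" where "meanG x = sqrt x"
definition meanH :: "real \<Rightarrow> real" where "meanH x = 2 * x / (x + 1)"
definition meanS :: "real \<Rightarrow> real" where "meanS x = sqrt ((x\<^sup>2 + 1) / 2)"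

definition f1 :: "real \<Rightarrow> real" where "f1 x = meanA x - (meanG x + meanS x) / 2"
definition f2 :: "real \<Rightarrow> real" where "f2 x = (meanA x + meanH x) / 2 - meanG x"
definition f3 :: "real \<Rightarrow> real" where
  "f3 x = (1/3) * (3 * meanA x + meanH x - meanS x - 3 * meanG x)"
definition f6 :: "real \<Rightarrow> real" where
  "f6 x = (1/6) * (meanS x + 2 * meanH x - 3 * meanG x)"
definition f8 :: "real \<Rightarrow> real" where
  "f8 x = (1/6) * (3 * meanA x - 2 * meanS x - meanH x)"

end

theory Submission
  imports Defs
begin

lemma mult_2sq: "(2*(w::real))^2 = 4*w^2" by (simp add: power2_eq_square)

lemma key:
  fixes x :: real assumes "x > 0"
  shows "meanA x + meanG x \<le> meanS x + meanH x"
proof -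
  define u where "u = sqrt x"
  have u: "u > 0" "x = u^2" using assms by (auto simp: u_def)
  define R where "R = (u^2+1)/2 + u - 2*u^2/(u^2+1)"
  have pos: "(u^2+1) > 0" using zero_le_power2[of u] by linarith
  have R2: "R * (2*(u^2+1)) = u^4+2*u^3-2*u^2+2*u+1"
    unfolding R_def using pos by (simp add: field_simps power2_eq_square power3_eq_cube power4_eq_xxxx)
  have poly: "(u^4+2*u^3-2*u^2+2*u+1)^2 \<le> 2*(u^4+1)*(u^2+1)^2"
  proof -
    have "2*(u^4+1)*(u^2+1)^2 - (u^4+2*u^3-2*u^2+2*u+1)^2 = (u-1)^4*(u^2-1)^2"
      by (simp add: algebra_simps power2_eq_square power3_eq_cube power4_eq_xxxx)
    moreover have "(u-1)^4*(u^2-1)^2 \<ge> 0" by simp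
    ultimately show ?thesis by linarith
  qed
  have "R^2 * (2*(u^2+1))^2 = (u^4+2*u^3-2*u^2+2*u+1)^2"
    using R2 by (metis power_mult_distrib)
  moreover have "(2*(u^2+1))^2 = 4*(u^2+1)^2"
    using mult_2sq[of "u^2+1"] .
  ultimately have "R^2 * (4*(u^2+1)^2) \<le> 2*(u^4+1)*(u^2+1)^2" using poly by simp
  hence "(R^2*4) * (u^2+1)^2 \<le> (2*(u^4+1)) * (u^2+1)^2" by (simp add: mult_ac)
  hence "R^2*4 \<le> 2*(u^4+1)" using zero_less_power[OF pos, of 2] mult_le_cancel_right_pos by blast
  hence "R^2 \<le> (u^4+1)/2" by simp
  hence "R \<le> sqrt ((u^4+1)/2)" by (simp add: real_le_rsqrt)
  moreover have "meanS x = sqrt ((u^4+1)/2)" unfolding meanS_def u(2) by simp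
  moreover have "meanA x + meanG x - meanH x = R"
    unfolding meanA_def meanG_def meanH_def R_def u(2) using u(1) by simp
  ultimately show ?thesis by linarith
qed

lemma lin:
  fixes q a g s h :: real
  assumes "q > 0" "a + g \<le> s + h"
  shows "q * (1/6 * (3*a - 2*s - h)) \<le> 1/3 * (q * (a - (g+s)/2))"
    "1/3 * (q * (a - (g+s)/2)) \<le> 1/4 * (q * (1/3 * (3*a + h - s - 3*g)))"
    "1/4 * (q * (1/3 * (3*a + h - s - 3*g))) \<le> 1/3 * (q * ((a+h)/2 - g))"
    "1/3 * (q * ((a+h)/2 - g)) \<le> q * (1/6 * (s + 2*h - 3*g))"
proof -
  have H: "q*(s+h-a-g) \<ge> 0" using assms by simp
  have e1: "1/3 * (q * (a - (g+s)/2)) - q * (1/6 * (3*a - 2*s - h)) = q*(s+h-a-g)/6"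
    by (simp add: field_simps)
  have e2: "1/4 * (q * (1/3 * (3*a + h - s - 3*g))) - 1/3 * (q * (a - (g+s)/2)) = q*(s+h-a-g)/12"
    by (simp add: field_simps)
  have e3: "1/3 * (q * ((a+h)/2 - g)) - 1/4 * (q * (1/3 * (3*a + h - s - 3*g))) = q*(s+h-a-g)/12"
    by (simp add: field_simps)
  have e4: "q * (1/6 * (s + 2*h - 3*g)) - 1/3 * (q * ((a+h)/2 - g)) = q*(s+h-a-g)/6"
    by (simp add: field_simps)
  show "q * (1/6 * (3*a - 2*s - h)) \<le> 1/3 * (q * (a - (g+s)/2))" using H e1 by linarith
  show "1/3 * (q * (a - (g+s)/2)) \<le> 1/4 * (q * (1/3 * (3*a + h - s - 3*g)))" using H e2 by linarith
  show "1/4 * (q * (1/3 * (3*a + h - s - 3*g))) \<le> 1/3 * (q * ((a+h)/2 - g))" using H e3 by linarith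
  show "1/3 * (q * ((a+h)/2 - g)) \<le> q * (1/6 * (s + 2*h - 3*g))" using H e4 by linarith
qed

theorem theorem7p1:
  fixes n :: nat and P Q :: "nat \<Rightarrow> real"
  assumes "n \<ge> 2" and "prob_vec n P" and "prob_vec n Q"
  shows "csiszar f8 n P Q \<le> (1/3) * csiszar f1 n P Q
       \<and> (1/3) * csiszar f1 n P Q \<le> (1/4) * csiszar f3 n P Q
       \<and> (1/4) * csiszar f3 n P Q \<le> (1/3) * csiszar f2 n P Q
       \<and> (1/3) * csiszar f2 n P Q \<le> csiszar f6 n P Q"
proof -
  have k: "\<And>i. i < n \<Longrightarrow> Q i > 0 \<and> meanA (P i / Q i) + meanG (P i / Q i) \<le> meanS (P i / Q i) + meanH (P i / Q i)"
    using assms(2,3) key unfolding prob_vec_def by auto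
  have a: "\<And>i. i < n \<Longrightarrow> Q i * f8 (P i / Q i) \<le> 1/3 * (Q i * f1 (P i / Q i))"
    unfolding f8_def f1_def using lin(1)[OF conjunct1[OF k] conjunct2[OF k]] by blast
  have b: "\<And>i. i < n \<Longrightarrow> 1/3 * (Q i * f1 (P i / Q i)) \<le> 1/4 * (Q i * f3 (P i / Q i))"
    unfolding f3_def f1_def using lin(2)[OF conjunct1[OF k] conjunct2[OF k]] by blast
  have c: "\<And>i. i < n \<Longrightarrow> 1/4 * (Q i * f3 (P i / Q i)) \<le> 1/3 * (Q i * f2 (P i / Q i))"
    unfolding f3_def f2_def using lin(3)[OF conjunct1[OF k] conjunct2[OF k]] by blast
  have d: "\<And>i. i < n \<Longrightarrow> 1/3 * (Q i * f2 (P i / Q i)) \<le> Q i * f6 (P i / Q i)"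
    unfolding f6_def f2_def using lin(4)[OF conjunct1[OF k] conjunct2[OF k]] by blast
  show ?thesis unfolding csiszar_def sum_distrib_left
    using sum_mono[of "{..<n}", OF a] sum_mono[of "{..<n}", OF b]
      sum_mono[of "{..<n}", OF c] sum_mono[of "{..<n}", OF d] by auto
qed

end
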